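(* Let $Q$ be a square-free word of length $n\geq 2$. Then the number of almost-square factors of $Q$ (counted as occurrences, i.e., as pairs (starting position, length) such that the corresponding factor is an almost-square) is less than $2n\log_{5/4} n$.
   Context: Words are finite sequences of letters. A factor of $Q$ is a contiguous subword. An extension of a word $W$ over an alphabet $\mathbb{A}$ is a word $W_1xW_2$ with $W=W_1W_2$ ($W_1,W_2$ possibly empty) and $x\in\mathbb{A}$. An almost-square is a word of the form $WW'$ where $W'$ is either an extension of $W$ or is obtained by deleting one letter from $W$. A square is a nonempty word of the form $YY$; a word is square-free if none of its factors is a square. *)

theory Defs
  imports Complex_Main
begin

definition is_factor :: "'a list \<Rightarrow> 'a list \<Rightarrow> bool" where
  "is_factor u Q \<longleftrightarrow> (\<exists>p s. Q = p @ u @ s)"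

definition is_extension :: "'a list \<Rightarrow> 'a list \<Rightarrow> bool" where
  "is_extension V W \<longleftrightarrow> (\<exists>W1 W2 x. W = W1 @ W2 \<and> V = W1 @ x # W2)"

definition is_deletion :: "'a list \<Rightarrow> 'a list \<Rightarrow> bool" where
  "is_deletion V W \<longleftrightarrow> (\<exists>W1 W2 x. W = W1 @ x # W2 \<and> V = W1 @ W2)"

definition almost_square :: "'a list \<Rightarrow> bool" where
  "almost_square U \<longleftrightarrow> (\<exists>W W'. U = W @ W' \<and> (is_extension W' W \<or> is_deletion W' W))"

definition square_free :: "'a list \<Rightarrow> bool" where
  "square_free Q \<longleftrightarrow> \<not> (\<exists>Y. Y \<noteq> [] \<and> is_factor (Y @ Y) Q)"

definition almost_square_occs :: "'a list \<Rightarrow> (nat \<times> nat) set" where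
  "almost_square_occs Q = {(i, l). 0 < l \<and> i + l \<le> length Q \<and> almost_square (take l (drop i Q))}"

end

theory Submission
  imports Defs
begin

definition t2 :: "'a list \<Rightarrow> nat \<Rightarrow> nat \<Rightarrow> nat \<Rightarrow> bool" where
"t2 Q i k p \<longleftrightarrow> 0<k \<and> p<k \<and> i+2*k \<le> length Q + 1 \<and> (\<forall>j<p. Q!(i+j) = Q!(i+j+k))
   \<and> (\<forall>j. p<j \<and> j<k \<longrightarrow> Q!(i+j) = Q!(i+j+k-1))"

definition sqf :: "'a list \<Rightarrow> bool" where
"sqf Q \<longleftrightarrow> (\<forall>a h. 0<h \<and> a+2*h \<le> length Q \<longrightarrow> \<not>(\<forall>t<h. Q!(a+t) = Q!(a+t+h)))"

lemma sqf_of: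
  assumes "square_free Q" shows "sqf Q"
  unfolding sqf_def
proof (intro allI impI notI)
  fix a h assume h: "0<h \<and> a+2*h \<le> length Q" and eq: "\<forall>t<h. Q!(a+t) = Q!(a+t+h)"
  define Y where "Y = take h (drop a Q)"
  have Y2: "take h (drop (a+h) Q) = Y"
    unfolding Y_def using h eq by (intro nth_equalityI) (auto simp: add.commute add.left_commute)
  have "take (h+h) (drop a Q) = Y @ Y"
    by (simp add: take_add Y_def[symmetric] Y2[symmetric] add.commute)
  hence "Q = take a Q @ (Y @ Y) @ drop (h+h) (drop a Q)"
    by (metis append_take_drop_id)
  hence "is_factor (Y@Y) Q" unfolding is_factor_def by blast
  moreover have "Y \<noteq> []" using h by (simp add: Y_def)
  ultimately show False using assms unfolding square_free_def by blast
qed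

lemma t2D: assumes "t2 Q i k p"
  shows "0<k" "p<k" "i+2*k \<le> length Q + 1" "\<And>j. j<p \<Longrightarrow> Q!(i+j) = Q!(i+j+k)"
   "\<And>j. p<j \<Longrightarrow> j<k \<Longrightarrow> Q!(i+j) = Q!(i+j+k-1)"
  using assms unfolding t2_def by auto

lemma sqfD: "sqf Q \<Longrightarrow> 0<h \<Longrightarrow> a+2*h \<le> length Q \<Longrightarrow> (\<And>t. t<h \<Longrightarrow> Q!(a+t) = Q!(a+t+h)) \<Longrightarrow> False"
  unfolding sqf_def by blast

lemma sqA:
  assumes P: "t2 Q i k p" and R: "t2 Q i k2 p2" and kk: "k<k2" and S: "sqf Q"
    and c1: "k2-k \<le> p2" and c2: "2*(k2-k) \<le> p"
  shows False
proof (rule sqfD[OF S, of "k2-k" i])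
  show "0 < k2-k" using kk by simp
  show "i + 2*(k2-k) \<le> length Q" using t2D[OF P] t2D[OF R] c2 by linarith
  fix t assume t: "t < k2-k"
  have 1: "Q!(i+t) = Q!(i+t+k2)" using t2D(4)[OF R, of t] t c1 by linarith
  have 2: "Q!(i+(t+(k2-k))) = Q!(i+(t+(k2-k))+k)" using t2D(4)[OF P, of "t+(k2-k)"] t c2 by linarith
  have 3: "i+(t+(k2-k))+k = i+t+k2" "i+(t+(k2-k)) = i+t+(k2-k)" using kk by auto
  show "Q!(i+t) = Q!(i+t+(k2-k))" by (metis 1 2 3)
qed

lemma sqB:
  assumes P: "t2 Q i k p" and R: "t2 Q i k2 p2" and kk: "k<k2" and S: "sqf Q"
    and c1: "p2+1 \<le> j0" and c2: "p+1 \<le> j0+(k2-k)" and c3: "j0+2*(k2-k) \<le> k"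
  shows False
proof (rule sqfD[OF S, of "k2-k" "i+j0"])
  show "0 < k2-k" using kk by simp
  show "i + j0 + 2*(k2-k) \<le> length Q" using t2D[OF P] t2D[OF R] c3 kk by linarith
  fix t assume t: "t < k2-k"
  have 1: "Q!(i+(j0+t)) = Q!(i+(j0+t)+k2-1)" using t2D(5)[OF R, of "j0+t"] t c1 c3 kk by linarith
  have 2: "Q!(i+(j0+t+(k2-k))) = Q!(i+(j0+t+(k2-k))+k-1)" using t2D(5)[OF P, of "j0+t+(k2-k)"] t c2 c3 by linarith
  have 3: "i+(j0+t+(k2-k))+k-1 = i+(j0+t)+k2-1" "i+(j0+t+(k2-k)) = i+j0+t+(k2-k)" "i+(j0+t) = i+j0+t" using kk by auto
  show "Q!(i+j0+t) = Q!(i+j0+t+(k2-k))" by (metis 1 2 3)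
qed

lemma sqC:
  assumes P: "t2 Q i k p" and R: "t2 Q i k2 p2" and kk: "k<k2" and S: "sqf Q"
    and c1: "p \<le> j0+(k2-k)" and c2: "j0+(k2-k)+1 \<le> p2" and c3: "j0+2*(k2-k)+1 < k"
  shows False
proof (rule sqfD[OF S, of "k2-k+1" "i+j0"])
  show "0 < k2-k+1" using kk by simp
  show "i + j0 + 2*(k2-k+1) \<le> length Q" using t2D(3)[OF R] c3 kk by simp
  fix t assume t: "t < k2-k+1"
  have 1: "Q!(i+(j0+t)) = Q!(i+(j0+t)+k2)" using t2D(4)[OF R, of "j0+t"] t c2 by linarith
  have 2: "Q!(i+(j0+t+(k2-k+1))) = Q!(i+(j0+t+(k2-k+1))+k-1)" using t2D(5)[OF P, of "j0+t+(k2-k+1)"] t c1 c3 by linarith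
  have 3: "i+(j0+t+(k2-k+1))+k-1 = i+(j0+t)+k2" "i+(j0+t+(k2-k+1)) = i+j0+t+(k2-k+1)" "i+(j0+t) = i+j0+t" using kk by auto
  show "Q!(i+j0+t) = Q!(i+j0+t+(k2-k+1))" by (metis 1 2 3)
qed

lemma sqD:
  assumes P: "t2 Q i k p" and R: "t2 Q i k2 p2" and kk: "k+2\<le>k2" and S: "sqf Q"
    and c1: "p2 + 2*(k2-k) \<le> p + 1"
  shows False
proof (rule sqfD[OF S, of "k2-k-1" "i+p2+1"])
  show "0 < k2-k-1" using kk by simp
  show "i + p2 + 1 + 2*(k2-k-1) \<le> length Q" using t2D[OF P] t2D[OF R] c1 kk by linarith
  fix t assume t: "t < k2-k-1"
  have 1: "Q!(i+(p2+1+t)) = Q!(i+(p2+1+t)+k2-1)" using t2D(5)[OF R, of "p2+1+t"] t2D[OF P] t c1 kk by linarith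
  have 2: "Q!(i+(p2+1+t+(k2-k-1))) = Q!(i+(p2+1+t+(k2-k-1))+k)" using t2D(4)[OF P, of "p2+1+t+(k2-k-1)"] t c1 by linarith
  have 3: "i+(p2+1+t+(k2-k-1))+k = i+(p2+1+t)+k2-1" "i+(p2+1+t+(k2-k-1)) = i+p2+1+t+(k2-k-1)" "i+(p2+1+t) = i+p2+1+t" using kk by auto
  show "Q!(i+p2+1+t) = Q!(i+p2+1+t+(k2-k-1))" by (metis 1 2 3)
qed

lemma sqD1:
  assumes P: "t2 Q i k p" and R: "t2 Q i (k+1) p2" and S: "sqf Q"
    and c1: "p2 < p"
  shows False
proof (rule sqfD[OF S, of "k" "i"])
  show "0 < k" using t2D[OF P] by simp
  show "i + 2*k \<le> length Q" using t2D(3)[OF R] by simp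
  fix t assume t: "t < k"
  show "Q!(i+t) = Q!(i+t+k)"
  proof (cases "t < p")
    case True thus ?thesis using t2D(4)[OF P] by auto
  next
    case False thus ?thesis using t2D(5)[OF R, of t] t c1 by auto
  qed
qed

lemma key:
  assumes P: "t2 Q i k p" and R: "t2 Q i k2 p2" and kk: "k<k2" and S: "sqf Q"
  shows "k < 4*(k2-k)"
proof (rule ccontr)
  assume "\<not> k < 4*(k2-k)"
  hence k4: "4*(k2-k) \<le> k" by simp
  have pk: "p < k" "p2 < k2" using P R unfolding t2_def by auto
  define d where "d = k2 - k"
  have d1: "1 \<le> d" "k2 = k + d" using kk by (auto simp: d_def)
  have nD: "\<not> (p2 + 2*d \<le> p + 1)"
  proof
    assume c: "p2 + 2*d \<le> p + 1"
    show False
    proof (cases "d = 1")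
      case True thus False using sqD1[OF P _ S, of p2] R d1 c by auto
    next
      case False
      hence "k+2 \<le> k2" using d1 by simp
      moreover have "p2 + 2*(k2-k) \<le> p + 1" using c d_def by simp
      ultimately show False using sqD[OF P R _ S] by blast
    qed
  qed
  have nA: "\<not> (d \<le> p2 \<and> 2*d \<le> p)" using sqA[OF P R kk S] by (auto simp: d_def)
  have nB: "\<And>j0. \<not>(p2+1 \<le> j0 \<and> p+1 \<le> j0+d \<and> j0+2*d \<le> k)" using sqB[OF P R kk S] by (auto simp: d_def)
  have nC: "\<And>j0. \<not>(p \<le> j0+d \<and> j0+d+1 \<le> p2 \<and> j0+2*d+1 < k)" using sqC[OF P R kk S] by (auto simp: d_def)
  have k4': "4*d \<le> k" using k4 by (simp add: d_def)
  show False
  proof (cases "p2+1 \<le> p+1-d")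
    case True
    have "\<not>(p+1+d \<le> k)" using nB[of "p+1-d"] True by auto
    thus False using nD nA k4' d1 pk by linarith
  next
    case False
    have "\<not>(p2+1+2*d \<le> k)" using nB[of "p2+1"] False by auto
    hence "p < 2*d" using nA k4' d1 by linarith
    show False
    proof (cases "p \<le> d")
      case True thus False using nC[of 0] `p < 2*d` k4' d1 `\<not>(p2+1+2*d \<le> k)` by linarith
    next
      case False thus False using nC[of "p-d"] `p < 2*d` k4' d1 `\<not>(p2+1+2*d \<le> k)` by linarith
    qed
  qed
qed

definition del_sq :: "'a list \<Rightarrow> bool" where
"del_sq U \<longleftrightarrow> (\<exists>W1 W2 x. U = W1 @ x # W2 @ W1 @ W2)"
definition ext_sq :: "'a list \<Rightarrow> bool" where
"ext_sq U \<longleftrightarrow> (\<exists>W1 W2 x. U = W1 @ W2 @ W1 @ x # W2)"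

lemma as_cases: assumes "almost_square U" shows "del_sq U \<or> ext_sq U"
proof -
  obtain W W' where U: "U = W @ W'" and c: "is_extension W' W \<or> is_deletion W' W"
    using assms unfolding almost_square_def by blast
  show ?thesis using c
  proof
    assume "is_extension W' W"
    then obtain W1 W2 x where "W = W1@W2" "W' = W1@x#W2" unfolding is_extension_def by blast
    hence "ext_sq U" unfolding ext_sq_def using U by auto
    thus ?thesis by blast
  next
    assume "is_deletion W' W"
    then obtain W1 W2 x where "W = W1@x#W2" "W' = W1@W2" unfolding is_deletion_def by blast
    hence "del_sq U" unfolding del_sq_def using U by auto
    thus ?thesis by blast
  qed
qed

lemma ext_rev: "ext_sq U \<Longrightarrow> del_sq (rev U)"
proof -
  assume "ext_sq U"
  then obtain W1 W2 x where "U = W1 @ W2 @ W1 @ x # W2" unfolding ext_sq_def by blast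
  hence "rev U = rev W2 @ x # rev W1 @ rev W2 @ rev W1" by simp
  thus ?thesis unfolding del_sq_def by blast
qed

lemma del_t2:
  assumes "del_sq (take l (drop i Q))" "i+l \<le> length Q"
  shows "\<exists>k p. l+1 = 2*k \<and> t2 Q i k p"
proof -
  obtain W1 W2 x where U: "take l (drop i Q) = W1 @ x # W2 @ W1 @ W2" using assms(1) unfolding del_sq_def by blast
  define k where "k = length W1 + 1 + length W2"
  define p where "p = length W1"
  have lU: "l = length (take l (drop i Q))" using assms(2) by simp
  hence lk: "l + 1 = 2*k" using U by (simp add: k_def)
  have nth: "\<And>j. j < l \<Longrightarrow> Q!(i+j) = (W1 @ x # W2 @ W1 @ W2)!j"
    using assms(2) by (simp flip: U)
  have "t2 Q i k p" unfolding t2_def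
  proof (intro conjI allI impI)
    show "0<k" "p<k" by (auto simp: k_def p_def)
    show "i + 2 * k \<le> length Q + 1" using lk assms(2) by simp
  next
    fix j assume j: "j < p"
    have "Q!(i+j) = (W1 @ x # W2 @ W1 @ W2)!j" using nth j lk by (simp add: p_def k_def)
    also have "\<dots> = W1!j" using j by (simp add: p_def nth_append)
    also have "\<dots> = (W1 @ x # W2 @ W1 @ W2)!(j+k)" using j by (simp add: p_def k_def nth_append)
    also have "\<dots> = Q!(i+(j+k))" using nth[of "j+k"] j lk by (simp add: p_def k_def)
    finally show "Q!(i+j) = Q!(i+j+k)" by (simp add: add.assoc)
  next
    fix j assume j: "p < j \<and> j < k"
    have "Q!(i+j) = (W1 @ x # W2 @ W1 @ W2)!j" using nth j lk by simp
    also have "\<dots> = (x # W2 @ W1 @ W2)!(j-p)" using j by (simp add: p_def nth_append)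
    also have "\<dots> = (W2 @ W1 @ W2)!(j-p-1)" using j by (simp add: nth_Cons')
    also have "\<dots> = W2!(j - p - 1)"
      by (rule nth_append_left) (use j in \<open>auto simp add: p_def k_def\<close>)
    also have "\<dots> = (W1 @ W2)!(j-1)"
    proof -
      have "(W1 @ W2)!(j-1) = W2!(j-1-length W1)" by (rule nth_append_right) (use j in \<open>auto simp: p_def\<close>)
      moreover have "j-1-length W1 = j-p-1" by (simp add: p_def)
      ultimately show ?thesis by simp
    qed
    also have "\<dots> = ((W1 @ x # W2) @ (W1 @ W2))!(j+k-1)" using j by (simp add: k_def nth_append del: append_assoc)
    also have "\<dots> = (W1 @ x # W2 @ W1 @ W2)!(j+k-1)" by simp
    also have "\<dots> = Q!(i+(j+k-1))"
    proof -
      have "j+k-1 < l" using j lk by linarith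
      thus ?thesis using nth[of "j+k-1"] by simp
    qed
    finally show "Q!(i+j) = Q!(i+j+k-1)" using j by (simp add: add.assoc)
  qed
  thus ?thesis using lk by blast
qed

lemma chain_bound:
  fixes c :: real
  shows "finite S \<Longrightarrow> card S = Suc m \<Longrightarrow> \<forall>x\<in>S. c \<le> real x \<Longrightarrow>
    \<forall>x\<in>S. \<forall>y\<in>S. x<y \<longrightarrow> 5*x \<le> 4*y \<Longrightarrow> c*(5/4)^m \<le> real (Max S)"
proof (induction m arbitrary: S)
  case 0
  then obtain x where "S = {x}" by (auto simp: card_Suc_eq)
  thus ?case using 0 by simp
next
  case (Suc m)
  define M where "M = Max S"
  have ne: "S \<noteq> {}" using Suc.prems(2) by auto
  have MS: "M \<in> S" using Suc.prems(1) ne by (simp add: M_def)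
  define S' where "S' = S - {M}"
  have cS': "card S' = Suc m" using Suc.prems(1,2) MS by (simp add: S'_def)
  have fS': "finite S'" using Suc.prems(1) by (simp add: S'_def)
  have ne': "S' \<noteq> {}" using cS' by auto
  have IH: "c*(5/4)^m \<le> real (Max S')"
    using Suc.IH[OF fS' cS'] Suc.prems(3,4) by (auto simp: S'_def)
  have M'S: "Max S' \<in> S'" using fS' ne' by simp
  hence "Max S' \<in> S" "Max S' \<noteq> M" by (auto simp: S'_def)
  hence "Max S' < M" using Suc.prems(1) unfolding M_def by (meson Max_ge order_le_neq_trans)
  hence "5 * Max S' \<le> 4 * M" using Suc.prems(4) MS M'S by (auto simp: S'_def)
  hence "5 * real (Max S') \<le> 4 * real M" by linarith
  hence "c*(5/4)^(Suc m) \<le> real M" using IH by simp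
  thus ?case by (simp add: M_def)
qed

lemma pos_bound:
  assumes fS: "finite S" and sub: "S \<subseteq> {1..n}" and rat: "\<forall>x\<in>S. \<forall>y\<in>S. x<y \<longrightarrow> 5*x \<le> 4*y" and n2: "2 \<le> n"
  shows "real (card S) < log (5/4) (real n)"
proof -
  have "(5/4::real)^(card S) < real n"
  proof (cases "card S \<le> 1")
    case True
    hence "(5/4::real)^(card S) \<le> (5/4)^1" by (intro power_increasing) auto
    thus ?thesis using n2 by simp
  next
    case False
    hence "card S = Suc (Suc (card S - 2))" by simp
    then obtain m where m: "card S = Suc (Suc m)" by blast
    define mn where "mn = Min S"
    have ne: "S \<noteq> {}" using m by auto
    have mnS: "mn \<in> S" using fS ne by (simp add: mn_def)
    define S' where "S' = S - {mn}"
    have cS': "card S' = Suc m" using fS m mnS by (simp add: S'_def)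
    have fS': "finite S'" using fS by (simp add: S'_def)
    have ge2: "\<forall>x\<in>S'. 2 \<le> real x"
    proof
      fix x assume x: "x \<in> S'"
      hence "mn \<le> x" "x \<noteq> mn" using fS by (auto simp: S'_def mn_def)
      moreover have "1 \<le> mn" using mnS sub by auto
      ultimately show "2 \<le> real x" by linarith
    qed
    have "2*(5/4)^m \<le> real (Max S')"
      using chain_bound[OF fS' cS' ge2] rat by (auto simp: S'_def)
    moreover have "Max S' \<in> S'" using fS' cS' by (intro Max_in) auto
    hence "Max S' \<le> n" using sub by (auto simp: S'_def)
    ultimately have "2*(5/4::real)^m \<le> real n" by linarith
    moreover have "(5/4::real)^(card S) = (25/16) * (5/4)^m" using m by simp
    moreover have "(25/16) * (5/4::real)^m < 2 * (5/4)^m" by simp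
    ultimately show ?thesis by linarith
  qed
  hence "(5/4) powr real (card S) < real n" by (simp add: powr_realpow)
  thus ?thesis using n2 by (subst less_log_iff) auto
qed

definition Dset :: "'a list \<Rightarrow> (nat \<times> nat) set" where
"Dset Q = {(i, l). 0 < l \<and> i + l \<le> length Q \<and> del_sq (take l (drop i Q))}"
definition Eset :: "'a list \<Rightarrow> (nat \<times> nat) set" where
"Eset Q = {(i, l). 0 < l \<and> i + l \<le> length Q \<and> ext_sq (take l (drop i Q))}"

lemma D_bound:
  assumes S: "sqf Q" and n2: "2 \<le> length Q"
  shows "real (card (Dset Q)) < real (length Q) * log (5/4) (real (length Q))"
proof -
  define n where "n = length Q"
  define B where "B = (\<lambda>i. {l. (i,l) \<in> Dset Q})"
  have eq: "Dset Q = Sigma {..<n} B" by (auto simp: Dset_def B_def n_def)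
  have fB: "\<And>i. finite (B i)" by (rule finite_subset[of _ "{..n}"]) (auto simp: B_def Dset_def n_def)
  have "card (Dset Q) = (\<Sum>i<n. card (B i))" unfolding eq using fB by (simp add: card_SigmaI)
  hence "real (card (Dset Q)) = (\<Sum>i<n. real (card (B i)))" by simp
  also have "\<dots> < (\<Sum>i<n. log (5/4) (real n))"
  proof (rule sum_strict_mono)
    show "finite {..<n}" by simp
    show "{..<n} \<noteq> {}" using n2 by (auto simp: n_def lessThan_empty_iff)
    fix i assume "i \<in> {..<n}"
    show "real (card (B i)) < log (5/4) (real n)"
    proof (rule pos_bound[OF fB _ _ n2[folded n_def]])
      show "B i \<subseteq> {1..n}" by (auto simp: B_def Dset_def n_def)
      show "\<forall>x\<in>B i. \<forall>y\<in>B i. x < y \<longrightarrow> 5 * x \<le> 4 * y"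
      proof (intro ballI impI)
        fix x y assume x: "x \<in> B i" and y: "y \<in> B i" and xy: "x < y"
        obtain k p where k: "x+1 = 2*k" "t2 Q i k p" using del_t2[of x i Q] x by (auto simp: B_def Dset_def)
        obtain k2 p2 where k2: "y+1 = 2*k2" "t2 Q i k2 p2" using del_t2[of y i Q] y by (auto simp: B_def Dset_def)
        have "k < k2" using k k2 xy by linarith
        hence "k < 4*(k2-k)" using key[OF k(2) k2(2) _ S] by blast
        thus "5 * x \<le> 4 * y" using k(1) k2(1) `k<k2` by linarith
      qed
    qed
  qed
  also have "\<dots> = real n * log (5/4) (real n)" by simp
  finally show ?thesis by (simp add: n_def)
qed

lemma take_drop_rev:
  assumes "i + l \<le> length Q"
  shows "take l (drop (length Q - i - l) (rev Q)) = rev (take l (drop i Q))"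
  using assms by (intro nth_equalityI) (auto simp: rev_nth)

lemma sqf_rev: "square_free Q \<Longrightarrow> square_free (rev Q)"
  unfolding square_free_def is_factor_def
proof (clarify)
  fix Y p s assume h: "\<not> (\<exists>Y. Y \<noteq> [] \<and> (\<exists>p s. Q = p @ (Y @ Y) @ s))" "Y \<noteq> []" "rev Q = p @ (Y @ Y) @ s"
  hence "Q = rev s @ (rev Y @ rev Y) @ rev p" by (metis rev_append rev_rev_ident append_assoc)
  thus False using h(1,2) by blast
qed

lemma E_le: "card (Eset Q) \<le> card (Dset (rev Q))"
proof (rule card_inj_on_le)
  let ?f = "\<lambda>(i,l). (length Q - i - l, l)"
  show "inj_on ?f (Eset Q)" by (auto simp: inj_on_def Eset_def)
  show "?f ` Eset Q \<subseteq> Dset (rev Q)"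
  proof clarify
    fix i l assume "(i,l) \<in> Eset Q"
    hence h: "0 < l" "i + l \<le> length Q" "ext_sq (take l (drop i Q))" by (auto simp: Eset_def)
    thus "(length Q - i - l, l) \<in> Dset (rev Q)"
      using ext_rev[OF h(3)] take_drop_rev[OF h(2)] by (auto simp: Dset_def)
  qed
  show "finite (Dset (rev Q))"
    by (rule finite_subset[of _ "{..length Q} \<times> {..length Q}"]) (auto simp: Dset_def)
qed

theorem mainTheorem7:
  fixes Q :: "'a list"
  assumes "square_free Q" and "length Q \<ge> 2"
  shows "real (card (almost_square_occs Q)) < 2 * real (length Q) * log (5/4) (real (length Q))"
proof -
  have sub: "almost_square_occs Q \<subseteq> Dset Q \<union> Eset Q"
    using as_cases by (fastforce simp: almost_square_occs_def Dset_def Eset_def)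
  have fD: "finite (Dset Q)"
    by (rule finite_subset[of _ "{..length Q} \<times> {..length Q}"]) (auto simp: Dset_def)
  have fE: "finite (Eset Q)"
    by (rule finite_subset[of _ "{..length Q} \<times> {..length Q}"]) (auto simp: Eset_def)
  have "card (almost_square_occs Q) \<le> card (Dset Q \<union> Eset Q)" using sub fD fE by (intro card_mono) auto
  also have "\<dots> \<le> card (Dset Q) + card (Eset Q)" by (rule card_Un_le)
  also have "\<dots> \<le> card (Dset Q) + card (Dset (rev Q))" using E_le by simp
  finally have c: "real (card (almost_square_occs Q)) \<le> real (card (Dset Q)) + real (card (Dset (rev Q)))" by linarith
  have 1: "real (card (Dset Q)) < real (length Q) * log (5/4) (real (length Q))"
    using D_bound[OF sqf_of[OF assms(1)] assms(2)] .
  have 2: "real (card (Dset (rev Q))) < real (length Q) * log (5/4) (real (length Q))"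
    using D_bound[OF sqf_of[OF sqf_rev[OF assms(1)]]] assms(2) by simp
  show ?thesis using c 1 2 by linarith
qed

end
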